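(* In the setting of the context (FSR scheme with direct flux reconstruction), let $\mathcal{E}_j=(\Phi_{j+1/2}-\Phi_{j-1/2})/h$, evaluated on the exact nodal values. If $\kappa_3=0$ and $\theta_3=0$, then as $h\to0$, with all derivatives evaluated at $x_j$, $$\mathcal{E}_j=\frac{\partial f}{\partial x}+\frac{3\theta-1}{12}\frac{\partial^3 f}{\partial x^3}h^2-\frac{\kappa-1}{8}\left[\frac{\partial D}{\partial x}\frac{\partial^3 u}{\partial x^3}+D(u(x_j))\frac{\partial^4 u}{\partial x^4}\right]h^3+\frac{15\theta-13}{240}\frac{\partial^5 f}{\partial x^5}h^4+O(h^5),$$ where $f$ denotes $f(u(x))$ and $\partial D/\partial x=\frac{d}{dx}D(u(x))$. In particular, with $\theta=1/3$ the scheme is third-order accurate.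
   Context: Let $h>0$, uniform grid $x_i=ih$, $i\in\mathbb{Z}$. Let $u$ be a smooth real function of $x$, $u_i=u(x_i)$; let $f$ (flux) and $D$ (dissipation coefficient) be smooth real functions of one variable; $f_i=f(u_i)$. For nodal values $g_i$ define successive central differences $(g_x)_i=(g_{i+1}-g_{i-1})/(2h)$, $(g_{xx})_i=((g_x)_{i+1}-(g_x)_{i-1})/(2h)$, and for the face $i+1/2$ with $j=i$, $k=i+1$, define $T_j[g]=\frac h4((g_x)_k-(g_x)_j)-\frac{h^2}{4}(g_{xx})_j$, $T_k[g]=\frac h4((g_x)_k-(g_x)_j)-\frac{h^2}{4}(g_{xx})_k$. Reconstructed solution states (parameters $\kappa,\kappa_3$): $u_L=\kappa\frac{u_j+u_k}{2}+(1-\kappa)[u_j+\frac h2(u_x)_j]+\kappa_3T_j[u]$, $u_R=\kappa\frac{u_j+u_k}{2}+(1-\kappa)[u_k-\frac h2(u_x)_k]+\kappa_3T_k[u]$. Reconstructed fluxes (parameters $\theta,\theta_3$): $f_L=\theta\frac{f_j+f_k}{2}+(1-\theta)[f_j+\frac h2(f_x)_j]+\theta_3T_j[f]$, $f_R=\theta\frac{f_j+f_k}{2}+(1-\theta)[f_k-\frac h2(f_x)_k]+\theta_3T_k[f]$. Numerical flux: $\Phi_{i+1/2}=\frac12(f_L+f_R)-\frac12D_{i+1/2}(u_R-u_L)$, with $D_{i+1/2}=\bar D(u_i,u_{i+1})$ for a smooth symmetric $\bar D$ with $\bar D(v,v)=D(v)$. *)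

theory Defs
  imports "HOL-Analysis.Analysis" "HOL-Library.Landau_Symbols"
begin

definition smooth1 :: "(real \<Rightarrow> real) \<Rightarrow> bool" where
  "smooth1 g \<longleftrightarrow> (\<forall>n x. (deriv ^^ n) g differentiable (at x))"

definition pd1 :: "(real \<Rightarrow> real \<Rightarrow> real) \<Rightarrow> real \<Rightarrow> real \<Rightarrow> real" where
  "pd1 F = (\<lambda>a b. deriv (\<lambda>s. F s b) a)"
definition pd2 :: "(real \<Rightarrow> real \<Rightarrow> real) \<Rightarrow> real \<Rightarrow> real \<Rightarrow> real" where
  "pd2 F = (\<lambda>a b. deriv (\<lambda>t. F a t) b)"

fun iterpd :: "bool list \<Rightarrow> (real \<Rightarrow> real \<Rightarrow> real) \<Rightarrow> real \<Rightarrow> real \<Rightarrow> real" where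
  "iterpd [] F = F"
| "iterpd (b # bs) F = (if b then pd1 else pd2) (iterpd bs F)"

definition smooth2 :: "(real \<Rightarrow> real \<Rightarrow> real) \<Rightarrow> bool" where
  "smooth2 F \<longleftrightarrow> (\<forall>bs. continuous_on UNIV (\<lambda>p. iterpd bs F (fst p) (snd p)) \<and>
     (\<forall>a b. (\<lambda>s. iterpd bs F s b) differentiable (at a) \<and>
            (\<lambda>t. iterpd bs F a t) differentiable (at b)))"

text \<open>Nodal values are indexed by integers: g i is the value at node i.\<close>
definition cdx :: "real \<Rightarrow> (int \<Rightarrow> real) \<Rightarrow> int \<Rightarrow> real" where
  "cdx h g i = (g (i + 1) - g (i - 1)) / (2 * h)"

definition cdxx :: "real \<Rightarrow> (int \<Rightarrow> real) \<Rightarrow> int \<Rightarrow> real" where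
  "cdxx h g i = (cdx h g (i + 1) - cdx h g (i - 1)) / (2 * h)"

text \<open>Correction terms at face i+1/2 (j = i, k = i+1).\<close>
definition Tj :: "real \<Rightarrow> (int \<Rightarrow> real) \<Rightarrow> int \<Rightarrow> real" where
  "Tj h g i = h / 4 * (cdx h g (i + 1) - cdx h g i) - h^2 / 4 * cdxx h g i"

definition Tk :: "real \<Rightarrow> (int \<Rightarrow> real) \<Rightarrow> int \<Rightarrow> real" where
  "Tk h g i = h / 4 * (cdx h g (i + 1) - cdx h g i) - h^2 / 4 * cdxx h g (i + 1)"

definition recL :: "real \<Rightarrow> real \<Rightarrow> real \<Rightarrow> (int \<Rightarrow> real) \<Rightarrow> int \<Rightarrow> real" where
  "recL k k3 h g i = k * (g i + g (i + 1)) / 2 + (1 - k) * (g i + h / 2 * cdx h g i)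
      + k3 * Tj h g i"

definition recR :: "real \<Rightarrow> real \<Rightarrow> real \<Rightarrow> (int \<Rightarrow> real) \<Rightarrow> int \<Rightarrow> real" where
  "recR k k3 h g i = k * (g i + g (i + 1)) / 2 + (1 - k) * (g (i + 1) - h / 2 * cdx h g (i + 1))
      + k3 * Tk h g i"

text \<open>Numerical flux at face i+1/2, given nodal solution values uv.\<close>
definition numflux :: "real \<Rightarrow> real \<Rightarrow> real \<Rightarrow> real \<Rightarrow> (real \<Rightarrow> real) \<Rightarrow>
    (real \<Rightarrow> real \<Rightarrow> real) \<Rightarrow> real \<Rightarrow> (int \<Rightarrow> real) \<Rightarrow> int \<Rightarrow> real" where
  "numflux k k3 th th3 f Dbar h uv i =
     (recL th th3 h (f \<circ> uv) i + recR th th3 h (f \<circ> uv) i) / 2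
     - Dbar (uv i) (uv (i + 1)) * (recR k k3 h uv i - recL k k3 h uv i) / 2"

text \<open>Truncation error at the node x (= x_j), using exact nodal values u(x + m h)
  at the nodes x_(j+m).\<close>
definition trunc_err :: "real \<Rightarrow> real \<Rightarrow> real \<Rightarrow> real \<Rightarrow> (real \<Rightarrow> real) \<Rightarrow>
    (real \<Rightarrow> real \<Rightarrow> real) \<Rightarrow> (real \<Rightarrow> real) \<Rightarrow> real \<Rightarrow> real \<Rightarrow> real" where
  "trunc_err k k3 th th3 f Dbar u x h =
     (let uv = (\<lambda>m::int. u (x + real_of_int m * h)) in
      (numflux k k3 th th3 f Dbar h uv 0 - numflux k k3 th th3 f Dbar h uv (-1)) / h)"

end

theory Submission
  imports Defs
begin


inductive_set SA :: "(real \<Rightarrow> real) \<Rightarrow> (real \<Rightarrow> real) \<Rightarrow> (real \<Rightarrow> real) set"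
  for f u :: "real \<Rightarrow> real" where
  gf: "(\<lambda>s. (deriv ^^ n) f (u s)) \<in> SA f u"
| gu: "(deriv ^^ n) u \<in> SA f u"
| add: "p \<in> SA f u \<Longrightarrow> q \<in> SA f u \<Longrightarrow> (\<lambda>s. p s + q s) \<in> SA f u"
| mul: "p \<in> SA f u \<Longrightarrow> q \<in> SA f u \<Longrightarrow> (\<lambda>s. p s * q s) \<in> SA f u"

lemma smooth1_D: "smooth1 g \<Longrightarrow> (deriv ^^ n) g field_differentiable at x"
  unfolding smooth1_def using field_differentiable_def
  by (metis DERIV_deriv_iff_real_differentiable)

lemma SA_closed:
  assumes "smooth1 f" "smooth1 u" "p \<in> SA f u"
  shows "(\<forall>x. p field_differentiable at x) \<and> deriv p \<in> SA f u"
  using assms(3)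
proof induction
  case (gf n)
  have e: "(\<lambda>s. (deriv ^^ n) f (u s)) = (deriv ^^ n) f \<circ> u" by (simp add: o_def)
  have d: "\<And>x. (deriv ^^ n) f \<circ> u field_differentiable at x"
    by (metis assms(1,2) field_differentiable_compose smooth1_D funpow_0)
  have "deriv ((deriv ^^ n) f \<circ> u) = (\<lambda>s. (deriv ^^ Suc n) f (u s) * (deriv ^^ Suc 0) u s)"
  proof
    fix s show "deriv ((deriv ^^ n) f \<circ> u) s = (deriv ^^ Suc n) f (u s) * (deriv ^^ Suc 0) u s"
      using deriv_chain[of u s "(deriv ^^ n) f"] smooth1_D[OF assms(1)] smooth1_D[OF assms(2), of 0]
      by simp
  qed
  moreover have "(\<lambda>s. (deriv ^^ Suc n) f (u s) * (deriv ^^ Suc 0) u s) \<in> SA f u"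
    by (rule SA.mul[OF SA.gf SA.gu])
  ultimately show ?case using d e by metis
next
  case (gu n)
  have "(deriv ^^ Suc n) u \<in> SA f u" by (rule SA.gu)
  then show ?case using smooth1_D[OF assms(2)] by auto
next
  case (add p q)
  have "deriv (\<lambda>s. p s + q s) = (\<lambda>s. deriv p s + deriv q s)"
    using add by (auto intro!: ext)
  then show ?case using add by (auto intro!: SA.intros field_differentiable_add)
next
  case (mul p q)
  have "deriv (\<lambda>s. p s * q s) = (\<lambda>s. p s * deriv q s + deriv p s * q s)"
    using mul by (auto intro!: ext)
  then show ?case using mul by (auto intro!: SA.intros field_differentiable_mult)
qed

lemma smooth1_comp:
  assumes "smooth1 f" "smooth1 u" shows "smooth1 (f \<circ> u)"
proof -
  have "(deriv ^^ n) (f \<circ> u) \<in> SA f u" for n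
  proof (induction n)
    case 0
    then show ?case using SA.gf[of 0 f u] by (simp add: o_def)
  next
    case (Suc n)
    then show ?case using SA_closed[OF assms] by simp
  qed
  then show ?thesis unfolding smooth1_def
    using SA_closed[OF assms] by (metis field_differentiable_imp_differentiable)
qed

lemma smooth2_slice:
  assumes "smooth2 Dbar" shows "smooth1 (\<lambda>s. Dbar a s)"
proof -
  have e: "(deriv ^^ n) (\<lambda>s. Dbar a s) = (\<lambda>s. iterpd (replicate n False) Dbar a s)" for n
    by (induction n) (auto simp: pd2_def)
  show ?thesis unfolding smooth1_def e using assms smooth2_def by blast
qed



lemma taylor_bigo:
  assumes "smooth1 g"
  shows "(\<lambda>h. g (x + c*h) - (\<Sum>m<N. (deriv^^m) g x / fact m * (c*h)^m)) \<in> O[at_right 0](\<lambda>h. h^N)"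
proof -
  define d where "d = (deriv^^N) g"
  have "d differentiable (at x)" using assms unfolding smooth1_def d_def by blast
  then have "isCont d x" by (simp add: differentiable_imp_continuous_within)
  then have "d \<midarrow>x\<rightarrow> d x" by (simp add: isCont_def)
  then obtain \<delta> where \<delta>: "\<delta> > 0" "\<And>y. y \<noteq> x \<Longrightarrow> norm (y - x) < \<delta> \<Longrightarrow> norm (d y - d x) < 1"
    unfolding LIM_eq by (meson zero_less_one)
  have dbound: "\<bar>d y\<bar> \<le> \<bar>d x\<bar> + 1" if "\<bar>y - x\<bar> < \<delta>" for y
    using \<delta>(2)[of y] that by (cases "y = x") auto
  define diff where "diff m = (\<lambda>s. (deriv^^m) g (s + x))" for m
  have DER: "\<forall>m s. DERIV (diff m) s :> diff (Suc m) s"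
  proof (intro allI)
    fix m s
    have "DERIV ((deriv^^m) g) (s + x) :> deriv ((deriv^^m) g) (s + x)"
      using assms unfolding smooth1_def by (simp add: DERIV_deriv_iff_real_differentiable)
    then show "DERIV (diff m) s :> diff (Suc m) s"
      unfolding diff_def by (simp add: DERIV_shift)
  qed
  have ev: "eventually (\<lambda>h. h > 0 \<and> h * (\<bar>c\<bar> + 1) < \<delta>) (at_right (0::real))"
    unfolding eventually_at_right_field
    by (rule exI[of _ "\<delta> / (\<bar>c\<bar> + 1)"])
       (use \<delta>(1) in \<open>auto simp: field_simps add_pos_nonneg\<close>)
  show ?thesis
  proof (rule bigoI[where c = "(\<bar>d x\<bar> + 1) / fact N * \<bar>c\<bar>^N"])
    show "eventually (\<lambda>h. norm (g (x + c*h) - (\<Sum>m<N. (deriv^^m) g x / fact m * (c*h)^m))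
        \<le> (\<bar>d x\<bar> + 1) / fact N * \<bar>c\<bar>^N * norm (h^N)) (at_right 0)"
      using ev
    proof eventually_elim
      case (elim h)
      obtain t where t: "\<bar>t\<bar> \<le> \<bar>c*h\<bar>"
        "g (c*h + x) = (\<Sum>m<N. (diff m 0 / fact m) * (c*h) ^ m) + (diff N t / fact N) * (c*h) ^ N"
        using Maclaurin_all_le[of diff "\<lambda>s. g (s + x)", OF _ DER, of "c*h" N]
        by (auto simp: diff_def)
      have "\<bar>c*h\<bar> < \<delta>" using elim
        by (smt (verit) abs_mult mult_nonneg_nonneg abs_ge_zero distrib_left mult.commute)
      then have "\<bar>d (t + x)\<bar> \<le> \<bar>d x\<bar> + 1" using t(1) by (intro dbound) auto
      then have "\<bar>diff N t / fact N * (c*h)^N\<bar> \<le> (\<bar>d x\<bar> + 1) / fact N * \<bar>c\<bar>^N * \<bar>h^N\<bar>"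
      proof -
        assume a: "\<bar>d (t + x)\<bar> \<le> \<bar>d x\<bar> + 1"
        have "\<bar>d (t + x)\<bar> * (\<bar>c\<bar>^N * \<bar>h\<bar>^N) \<le> (\<bar>d x\<bar> + 1) * (\<bar>c\<bar>^N * \<bar>h\<bar>^N)"
          by (rule mult_right_mono[OF a]) simp
        then have "\<bar>d (t + x)\<bar> * (\<bar>c\<bar>^N * \<bar>h\<bar>^N) / fact N \<le> (\<bar>d x\<bar> + 1) * (\<bar>c\<bar>^N * \<bar>h\<bar>^N) / fact N"
          by (rule divide_right_mono) simp
        then show ?thesis
          by (simp add: diff_def d_def abs_mult power_mult_distrib power_abs mult.assoc)
      qed
      moreover have "g (x + c*h) - (\<Sum>m<N. (deriv^^m) g x / fact m * (c*h)^m)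
          = diff N t / fact N * (c*h)^N"
        using t(2) by (simp add: diff_def add.commute)
      ultimately show ?case by simp
    qed
  qed
qed



lemma Dderiv:
  assumes sm: "smooth2 Dbar" and sy: "\<And>a b. Dbar a b = Dbar b a" and dg: "\<And>v. Dbar v v = D v"
  shows "(D has_real_derivative 2 * pd2 Dbar v v) (at v)"
proof -
  define P where "P = pd2 Dbar"
  have hasd: "DERIV (\<lambda>t. Dbar a t) b :> P a b" for a b
  proof -
    have "(\<lambda>t. iterpd [] Dbar a t) differentiable (at b)" using sm unfolding smooth2_def by blast
    then show ?thesis by (simp add: P_def pd2_def DERIV_deriv_iff_real_differentiable)
  qed
  have "continuous_on UNIV (\<lambda>p. iterpd [False] Dbar (fst p) (snd p))"
    using sm unfolding smooth2_def by blast
  then have cont: "isCont (\<lambda>p. P (fst p) (snd p)) (v, v)"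
    by (simp add: P_def continuous_on_eq_continuous_at)
  have mvt: "\<exists>\<xi>. \<bar>\<xi> - b1\<bar> \<le> \<bar>b2 - b1\<bar> \<and> Dbar a b2 - Dbar a b1 = (b2 - b1) * P a \<xi>" for a b1 b2
  proof (cases b1 b2 rule: linorder_cases)
    case less
    then obtain z where "b1 < z" "z < b2" "Dbar a b2 - Dbar a b1 = (b2 - b1) * P a z"
      using MVT2[of b1 b2 "\<lambda>t. Dbar a t" "P a"] hasd by blast
    then show ?thesis by (intro exI[of _ z]) auto
  next
    case equal then show ?thesis by auto
  next
    case greater
    then obtain z where "b2 < z" "z < b1" "Dbar a b1 - Dbar a b2 = (b1 - b2) * P a z"
      using MVT2[of b2 b1 "\<lambda>t. Dbar a t" "P a"] hasd by blast
    then show ?thesis by (intro exI[of _ z]) (auto simp: algebra_simps)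
  qed
  have "((\<lambda>y. (D y - D v) / (y - v)) \<longlongrightarrow> 2 * P v v) (at v)"
    unfolding LIM_eq
  proof (intro allI impI)
    fix r :: real assume r: "r > 0"
    obtain \<delta> where \<delta>: "\<delta> > 0"
      "\<And>q. dist q (v, v) < \<delta> \<Longrightarrow> dist (P (fst q) (snd q)) (P (fst (v,v)) (snd (v,v))) < r / 2"
      using cont r unfolding continuous_at_eps_delta by (meson half_gt_zero)
    have close: "\<bar>P a b - P v v\<bar> < r / 2" if "\<bar>a - v\<bar> < \<delta>/2" "\<bar>b - v\<bar> < \<delta>/2" for a b
    proof -
      have "dist (a, b) (v, v) \<le> \<bar>a - v\<bar> + \<bar>b - v\<bar>"
        unfolding dist_Pair_Pair dist_real_def using sqrt_sum_squares_le_sum_abs[of "a - v" "b - v"] by simp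
      then have "dist (a, b) (v, v) < \<delta>" using that by linarith
      from \<delta>(2)[OF this] show ?thesis by (simp add: dist_real_def)
    qed
    show "\<exists>s>0. \<forall>y. y \<noteq> v \<and> norm (y - v) < s \<longrightarrow> norm ((D y - D v) / (y - v) - 2 * P v v) < r"
    proof (intro exI[of _ "\<delta>/2"] conjI allI impI)
      show "\<delta>/2 > 0" using \<delta> by simp
      fix y assume y: "y \<noteq> v \<and> norm (y - v) < \<delta>/2"
      obtain \<xi>1 where x1: "\<bar>\<xi>1 - v\<bar> \<le> \<bar>y - v\<bar>" "Dbar y y - Dbar y v = (y - v) * P y \<xi>1"
        using mvt[of v y y] by blast
      obtain \<xi>2 where x2: "\<bar>\<xi>2 - v\<bar> \<le> \<bar>y - v\<bar>" "Dbar v y - Dbar v v = (y - v) * P v \<xi>2"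
        using mvt[of v y v] by blast
      have "D y - D v = (y - v) * (P y \<xi>1 + P v \<xi>2)"
        using x1(2) x2(2) dg[of y] dg[of v] sy[of y v] by (simp add: algebra_simps)
      then have q: "(D y - D v) / (y - v) - 2 * P v v = (P y \<xi>1 - P v v) + (P v \<xi>2 - P v v)"
        using y by (simp add: field_simps)
      have "\<bar>P y \<xi>1 - P v v\<bar> < r/2" using close y x1(1) by simp
      moreover have "\<bar>P v \<xi>2 - P v v\<bar> < r/2" using close y x2(1) \<delta>(1) by simp
      ultimately show "norm ((D y - D v) / (y - v) - 2 * P v v) < r"
        unfolding q real_norm_def by linarith
    qed
  qed
  then show ?thesis unfolding P_def by (simp add: has_field_derivative_iff)
qed



definition T6 :: "(nat \<Rightarrow> real) \<Rightarrow> real \<Rightarrow> real \<Rightarrow> real" where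
  "T6 d c h = d 0 + d 1 * (c*h) + d 2 / 2 * (c*h)^2 + d 3 / 6 * (c*h)^3 + d 4 / 24 * (c*h)^4
     + d 5 / 120 * (c*h)^5"
definition T3 :: "(nat \<Rightarrow> real) \<Rightarrow> real \<Rightarrow> real \<Rightarrow> real" where
  "T3 d c h = d 0 + d 1 * (c*h) + d 2 / 2 * (c*h)^2"
definition flux2 :: "real \<Rightarrow> real \<Rightarrow> real \<Rightarrow> real \<Rightarrow> real \<Rightarrow> real" where
  "flux2 th gm1 g0 g1 g2 = th*(g0+g1)/2 + (1-th)/2*(g0 + g1 + (g1 - gm1)/4 - (g2 - g0)/4)"
definition jump2 :: "real \<Rightarrow> real \<Rightarrow> real \<Rightarrow> real \<Rightarrow> real \<Rightarrow> real" where
  "jump2 k gm1 g0 g1 g2 = (1-k)*(g1 - g0 - (g2 - g0)/4 - (g1 - gm1)/4)"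

lemma sum6: "(\<Sum>m<6. d m / fact m * z^m) = T6 d 1 z"
  by (simp add: T6_def eval_nat_numeral fact_numeral)
lemma sum3: "(\<Sum>m<3. d m / fact m * z^m) = T3 d 1 z"
  by (simp add: T3_def eval_nat_numeral fact_numeral)
lemma T6_c: "T6 d 1 (c*h) = T6 d c h" by (simp add: T6_def)
lemma T3_c: "T3 d 1 (c*h) = T3 d c h" by (simp add: T3_def)

lemma jump2_T3:
  "jump2 k (A - T3 b (s-1) h) (B - T3 b s h) (C - T3 b (s+1) h) (E - T3 b (s+2) h) = jump2 k A B C E"
  unfolding jump2_def T3_def by (simp add: field_simps power2_eq_square)

lemma stepB:
  fixes a b p :: "nat \<Rightarrow> real"
  shows "flux2 th gB gC gD gE - flux2 th gA gB gC gD
   - (Dp * jump2 k vB vC vD vE - Dm * jump2 k vA vB vC vD)/2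
   - h * (a 1 + (3*th-1)/12 * a 3 * h^2 - (k-1)/8 * (2 * p 1 * b 3 + p 0 * b 4) * h^3
          + (15*th-13)/240 * a 5 * h^4)
  = flux2 th (gB - T6 a (-1) h) (gC - T6 a 0 h) (gD - T6 a 1 h) (gE - T6 a 2 h)
    - flux2 th (gA - T6 a (-2) h) (gB - T6 a (-1) h) (gC - T6 a 0 h) (gD - T6 a 1 h)
    - (T3 p 1 h * jump2 k (vB - T6 b (-1) h) (vC - T6 b 0 h) (vD - T6 b 1 h) (vE - T6 b 2 h)
       + (Dp - T3 p 1 h) * jump2 k vB vC vD vE
       - T3 p (-1) h * jump2 k (vA - T6 b (-2) h) (vB - T6 b (-1) h) (vC - T6 b 0 h) (vD - T6 b 1 h)
       - (Dm - T3 p (-1) h) * jump2 k vA vB vC vD) / 2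
    + (1-k)/16 * (b 4 * p 2 + b 5 * p 1) * h^6"
  unfolding flux2_def jump2_def T6_def T3_def
  by (simp add: field_simps) (simp add: algebra_simps power2_eq_square power3_eq_cube eval_nat_numeral)

lemma stepA:
  assumes "h \<noteq> 0"
  shows "trunc_err k 0 th 0 f Dbar u x h * h =
    flux2 th (f (u (x + (-1)*h))) (f (u (x + 0*h))) (f (u (x + 1*h))) (f (u (x + 2*h)))
  - flux2 th (f (u (x + (-2)*h))) (f (u (x + (-1)*h))) (f (u (x + 0*h))) (f (u (x + 1*h)))
  - (Dbar (u (x + 0*h)) (u (x + 1*h)) * jump2 k (u (x + (-1)*h)) (u (x + 0*h)) (u (x + 1*h)) (u (x + 2*h))
     - Dbar (u (x + (-1)*h)) (u (x + 0*h)) * jump2 k (u (x + (-2)*h)) (u (x + (-1)*h)) (u (x + 0*h)) (u (x + 1*h)))/2"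
  using assms
  by (simp add: trunc_err_def numflux_def recL_def recR_def cdx_def Tj_def Tk_def flux2_def jump2_def
      field_simps)

lemma taylor6: "smooth1 g \<Longrightarrow>
  (\<lambda>h. g (x + c*h) - T6 (\<lambda>n. (deriv^^n) g x) c h) \<in> O[at_right 0](\<lambda>h. h^6)"
  using taylor_bigo[of g x c 6] by (simp only: sum6 T6_c)
lemma taylor3: "smooth1 g \<Longrightarrow>
  (\<lambda>h. g (x + c*h) - T3 (\<lambda>n. (deriv^^n) g x) c h) \<in> O[at_right 0](\<lambda>h. h^3)"
  using taylor_bigo[of g x c 3] by (simp only: sum3 T3_c)

lemma cm: "f \<in> O[F](g) \<Longrightarrow> (\<lambda>x. c * f x) \<in> O[F](g)"
proof (cases "c = 0")
  case True
  have "(\<lambda>x. 0 * f x) \<in> O[F](g)" by (rule bigoI[where c=1]) simp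
  then show ?thesis using True by simp
qed simp

lemma lin4:
  assumes "f1 \<in> O[F](g)" "f2 \<in> O[F](g)" "f3 \<in> O[F](g)" "f4 \<in> O[F](g)"
  shows "(\<lambda>x. c1 * f1 x + c2 * f2 x + c3 * f3 x + c4 * f4 x) \<in> O[F](g)"
  by (intro sum_in_bigo cm assms)

lemma flux2_lin: "flux2 th a b c d = (-(1-th)/8)*a + (th/2 + 5*(1-th)/8)*b + (th/2 + 5*(1-th)/8)*c
   + (-(1-th)/8)*d"
  by (simp add: flux2_def field_simps)
lemma jump2_lin: "jump2 k a b c d = ((1-k)/4)*a + (-3*(1-k)/4)*b + (3*(1-k)/4)*c + (-(1-k)/4)*d"
  by (simp add: jump2_def field_simps)

lemma flux2_bigo:
  assumes "f1 \<in> O[F](g)" "f2 \<in> O[F](g)" "f3 \<in> O[F](g)" "f4 \<in> O[F](g)"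
  shows "(\<lambda>x. flux2 th (f1 x) (f2 x) (f3 x) (f4 x)) \<in> O[F](g)"
  unfolding flux2_lin by (rule lin4[OF assms])
lemma jump2_bigo:
  assumes "f1 \<in> O[F](g)" "f2 \<in> O[F](g)" "f3 \<in> O[F](g)" "f4 \<in> O[F](g)"
  shows "(\<lambda>x. jump2 k (f1 x) (f2 x) (f3 x) (f4 x)) \<in> O[F](g)"
  unfolding jump2_lin by (rule lin4[OF assms])

lemma T3_bigo1: "(\<lambda>h. T3 p c h) \<in> O[at_right 0](\<lambda>_. 1)"
proof (rule bigoI_tendsto)
  show "((\<lambda>h. T3 p c h / 1) \<longlongrightarrow> T3 p c 0) (at_right 0)"
    unfolding T3_def div_by_1 by (intro tendsto_intros)
qed simp

lemma bmul1: "q \<in> O[F](\<lambda>_. 1) \<Longrightarrow> f \<in> O[F](g) \<Longrightarrow> (\<lambda>x. q x * f x) \<in> O[F](g)"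
  using landau_o.big_1_mult'[of q F f g] by (simp add: mult.commute)
lemma cdiv: "f \<in> O[F](g) \<Longrightarrow> (\<lambda>x. f x / c) \<in> O[F](g)"
  using cm[of f F g "1/c"] by simp
lemma mul33: "f \<in> O[F](\<lambda>h::real. h^3) \<Longrightarrow> g \<in> O[F](\<lambda>h. h^3) \<Longrightarrow> (\<lambda>x. f x * g x) \<in> O[F](\<lambda>h. h^6)"
  using landau_o.big.mult[of f F "\<lambda>h. h^3" g "\<lambda>h. h^3"] by (simp add: power_add[symmetric])


theorem mainTheorem2:
  fixes u f D :: "real \<Rightarrow> real" and Dbar :: "real \<Rightarrow> real \<Rightarrow> real"
    and k k3 th th3 x :: real
  assumes "smooth1 u" and "smooth1 f" and "smooth1 D"
    and "smooth2 Dbar" and "\<And>a b. Dbar a b = Dbar b a" and "\<And>v. Dbar v v = D v"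
    and "k3 = 0" and "th3 = 0"
  shows "(\<lambda>h. trunc_err k k3 th th3 f Dbar u x h
           - ( deriv (f \<circ> u) x
             + (3 * th - 1) / 12 * (deriv ^^ 3) (f \<circ> u) x * h^2
             - (k - 1) / 8 * (deriv (D \<circ> u) x * (deriv ^^ 3) u x
                              + D (u x) * (deriv ^^ 4) u x) * h^3
             + (15 * th - 13) / 240 * (deriv ^^ 5) (f \<circ> u) x * h^4 ))
         \<in> O[at_right 0](\<lambda>h. h^5)"
proof -
  define F where "F = f \<circ> u"
  define \<psi> where "\<psi> = (\<lambda>s. Dbar (u x) s) \<circ> u"
  have smF: "smooth1 F" unfolding F_def by (rule smooth1_comp[OF assms(2,1)])
  have smS: "smooth1 (\<lambda>s. Dbar (u x) s)" by (rule smooth2_slice[OF assms(4)])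
  have smP: "smooth1 \<psi>" unfolding \<psi>_def by (rule smooth1_comp[OF smS assms(1)])
  define a where "a = (\<lambda>n. (deriv^^n) F x)"
  define b where "b = (\<lambda>n. (deriv^^n) u x)"
  define p where "p = (\<lambda>n. (deriv^^n) \<psi> x)"
  have tF: "(\<lambda>h. f (u (x + c*h)) - T6 a c h) \<in> O[at_right 0](\<lambda>h. h^6)" for c
    using taylor6[OF smF, of x c] unfolding a_def by (simp add: F_def)
  have tU6: "(\<lambda>h. u (x + c*h) - T6 b c h) \<in> O[at_right 0](\<lambda>h. h^6)" for c
    unfolding b_def by (rule taylor6[OF assms(1)])
  have tU3: "(\<lambda>h. u (x + c*h) - T3 b c h) \<in> O[at_right 0](\<lambda>h. h^3)" for c
    unfolding b_def by (rule taylor3[OF assms(1)])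
  have tP: "(\<lambda>h. \<psi> (x + c*h) - T3 p c h) \<in> O[at_right 0](\<lambda>h. h^3)" for c
    unfolding p_def by (rule taylor3[OF smP])
  have a1: "deriv (f \<circ> u) x = a 1" by (simp add: a_def F_def)
  have a3: "(deriv^^3) (f \<circ> u) x = a 3" by (simp add: a_def F_def)
  have a5: "(deriv^^5) (f \<circ> u) x = a 5" by (simp add: a_def F_def)
  have b3: "(deriv^^3) u x = b 3" by (simp add: b_def)
  have b4: "(deriv^^4) u x = b 4" by (simp add: b_def)
  have p0: "D (u x) = p 0" by (simp add: p_def \<psi>_def assms(6))
  have p1: "deriv (D \<circ> u) x = 2 * p 1"
  proof -
    have du: "u field_differentiable at x" using smooth1_D[OF assms(1), of 0] by simp
    have dS: "(\<lambda>s. Dbar (u x) s) field_differentiable at (u x)" using smooth1_D[OF smS, of 0] by simp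
    have dD: "D field_differentiable at (u x)" using smooth1_D[OF assms(3), of 0] by simp
    have "p 1 = deriv (\<lambda>s. Dbar (u x) s) (u x) * deriv u x"
      unfolding p_def \<psi>_def using deriv_chain[OF du dS] by simp
    also have "deriv (\<lambda>s. Dbar (u x) s) (u x) = pd2 Dbar (u x) (u x)" by (simp add: pd2_def)
    finally have 1: "p 1 = pd2 Dbar (u x) (u x) * deriv u x" .
    have "deriv (D \<circ> u) x = deriv D (u x) * deriv u x" by (rule deriv_chain[OF du dD])
    also have "deriv D (u x) = 2 * pd2 Dbar (u x) (u x)"
      by (rule DERIV_imp_deriv[OF Dderiv[OF assms(4,5,6)]])
    finally show ?thesis using 1 by (simp add: comp_def)
  qed
  define T' where "T' h = a 1 + (3*th-1)/12 * a 3 * h^2 - (k-1)/8 * (2 * p 1 * b 3 + p 0 * b 4) * h^3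
          + (15*th-13)/240 * a 5 * h^4" for h
  have tgt: "deriv (f \<circ> u) x
             + (3 * th - 1) / 12 * (deriv ^^ 3) (f \<circ> u) x * h^2
             - (k - 1) / 8 * (deriv (D \<circ> u) x * (deriv ^^ 3) u x
                              + D (u x) * (deriv ^^ 4) u x) * h^3
             + (15 * th - 13) / 240 * (deriv ^^ 5) (f \<circ> u) x * h^4 = T' h" for h
    unfolding a1 a3 a5 b3 b4 p0 p1 T'_def by simp
  define R where "R h =
      flux2 th (f (u (x + (-1)*h)) - T6 a (-1) h) (f (u (x + 0*h)) - T6 a 0 h) (f (u (x + 1*h)) - T6 a 1 h) (f (u (x + 2*h)) - T6 a 2 h)
    - flux2 th (f (u (x + (-2)*h)) - T6 a (-2) h) (f (u (x + (-1)*h)) - T6 a (-1) h) (f (u (x + 0*h)) - T6 a 0 h) (f (u (x + 1*h)) - T6 a 1 h)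
    - (T3 p 1 h * jump2 k (u (x + (-1)*h) - T6 b (-1) h) (u (x + 0*h) - T6 b 0 h) (u (x + 1*h) - T6 b 1 h) (u (x + 2*h) - T6 b 2 h)
       + (\<psi> (x + 1*h) - T3 p 1 h) * jump2 k (u (x + (-1)*h)) (u (x + 0*h)) (u (x + 1*h)) (u (x + 2*h))
       - T3 p (-1) h * jump2 k (u (x + (-2)*h) - T6 b (-2) h) (u (x + (-1)*h) - T6 b (-1) h) (u (x + 0*h) - T6 b 0 h) (u (x + 1*h) - T6 b 1 h)
       - (\<psi> (x + (-1)*h) - T3 p (-1) h) * jump2 k (u (x + (-2)*h)) (u (x + (-1)*h)) (u (x + 0*h)) (u (x + 1*h))) / 2
    + (1-k)/16 * (b 4 * p 2 + b 5 * p 1) * h^6" for h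
  have Dpeq: "Dbar (u (x + 0*h)) (u (x + 1*h)) = \<psi> (x + 1*h)" for h by (simp add: \<psi>_def)
  have Dmeq: "Dbar (u (x + (-1)*h)) (u (x + 0*h)) = \<psi> (x + (-1)*h)" for h
    by (simp add: \<psi>_def) (rule assms(5))
  have key: "trunc_err k 0 th 0 f Dbar u x h * h - h * T' h = R h" if "h \<noteq> 0" for h
  proof -
    note A = stepA[OF that, of k th f Dbar u x, unfolded Dpeq Dmeq]
    note B = stepB[where th=th and gB = "f (u (x + (-1)*h))" and gC = "f (u (x + 0*h))"
       and gD = "f (u (x + 1*h))" and gE = "f (u (x + 2*h))" and gA = "f (u (x + (-2)*h))"
       and Dp = "\<psi> (x + 1*h)" and Dm = "\<psi> (x + (-1)*h)" and k = k
       and vB = "u (x + (-1)*h)" and vC = "u (x + 0*h)" and vD = "u (x + 1*h)" and vE = "u (x + 2*h)"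
       and vA = "u (x + (-2)*h)" and h = h and a = a and b = b and p = p]
    show ?thesis unfolding A T'_def R_def by (rule B)
  qed
  have j0: "jump2 k A B C E' = jump2 k (A - T3 b (-1) h) (B - T3 b 0 h) (C - T3 b 1 h) (E' - T3 b 2 h)"
    for A B C E' h using jump2_T3[where s=0 and b=b and k=k and h=h and A=A and B=B and C=C and E=E'] by simp
  have j1: "jump2 k A B C E' = jump2 k (A - T3 b (-2) h) (B - T3 b (-1) h) (C - T3 b 0 h) (E' - T3 b 1 h)"
    for A B C E' h using jump2_T3[where s="-1" and b=b and k=k and h=h and A=A and B=B and C=C and E=E'] by simp
  have J0: "(\<lambda>h. jump2 k (u (x + (-1)*h)) (u (x + 0*h)) (u (x + 1*h)) (u (x + 2*h))) \<in> O[at_right 0](\<lambda>h. h^3)"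
  proof -
    have "(\<lambda>h. jump2 k (u (x + (-1)*h) - T3 b (-1) h) (u (x + 0*h) - T3 b 0 h) (u (x + 1*h) - T3 b 1 h) (u (x + 2*h) - T3 b 2 h)) \<in> O[at_right 0](\<lambda>h. h^3)"
      by (intro jump2_bigo tU3)
    then show ?thesis by (simp only: j0[symmetric])
  qed
  have J1: "(\<lambda>h. jump2 k (u (x + (-2)*h)) (u (x + (-1)*h)) (u (x + 0*h)) (u (x + 1*h))) \<in> O[at_right 0](\<lambda>h. h^3)"
  proof -
    have "(\<lambda>h. jump2 k (u (x + (-2)*h) - T3 b (-2) h) (u (x + (-1)*h) - T3 b (-1) h) (u (x + 0*h) - T3 b 0 h) (u (x + 1*h) - T3 b 1 h)) \<in> O[at_right 0](\<lambda>h. h^3)"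
      by (intro jump2_bigo tU3)
    then show ?thesis by (simp only: j1[symmetric])
  qed
  have X1: "(\<lambda>h. flux2 th (f (u (x + (-1)*h)) - T6 a (-1) h) (f (u (x + 0*h)) - T6 a 0 h) (f (u (x + 1*h)) - T6 a 1 h) (f (u (x + 2*h)) - T6 a 2 h)) \<in> O[at_right 0](\<lambda>h. h^6)"
    by (intro flux2_bigo tF)
  have X2: "(\<lambda>h. flux2 th (f (u (x + (-2)*h)) - T6 a (-2) h) (f (u (x + (-1)*h)) - T6 a (-1) h) (f (u (x + 0*h)) - T6 a 0 h) (f (u (x + 1*h)) - T6 a 1 h)) \<in> O[at_right 0](\<lambda>h. h^6)"
    by (intro flux2_bigo tF)
  have Y1: "(\<lambda>h. T3 p 1 h * jump2 k (u (x + (-1)*h) - T6 b (-1) h) (u (x + 0*h) - T6 b 0 h) (u (x + 1*h) - T6 b 1 h) (u (x + 2*h) - T6 b 2 h)) \<in> O[at_right 0](\<lambda>h. h^6)"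
    by (rule bmul1[OF T3_bigo1 jump2_bigo[OF tU6 tU6 tU6 tU6]])
  have Y3: "(\<lambda>h. T3 p (-1) h * jump2 k (u (x + (-2)*h) - T6 b (-2) h) (u (x + (-1)*h) - T6 b (-1) h) (u (x + 0*h) - T6 b 0 h) (u (x + 1*h) - T6 b 1 h)) \<in> O[at_right 0](\<lambda>h. h^6)"
    by (rule bmul1[OF T3_bigo1 jump2_bigo[OF tU6 tU6 tU6 tU6]])
  have Y2: "(\<lambda>h. (\<psi> (x + 1*h) - T3 p 1 h) * jump2 k (u (x + (-1)*h)) (u (x + 0*h)) (u (x + 1*h)) (u (x + 2*h))) \<in> O[at_right 0](\<lambda>h. h^6)"
    by (rule mul33[OF tP J0])
  have Y4: "(\<lambda>h. (\<psi> (x + (-1)*h) - T3 p (-1) h) * jump2 k (u (x + (-2)*h)) (u (x + (-1)*h)) (u (x + 0*h)) (u (x + 1*h))) \<in> O[at_right 0](\<lambda>h. h^6)"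
    by (rule mul33[OF tP J1])
  have C6: "(\<lambda>h. (1-k)/16 * (b 4 * p 2 + b 5 * p 1) * h^6) \<in> O[at_right 0](\<lambda>h. h^6)"
    by (rule cm[OF landau_o.big_refl])
  have Rb: "R \<in> O[at_right 0](\<lambda>h. h^6)"
    unfolding R_def[abs_def]
    by (rule sum_in_bigo(1)[OF sum_in_bigo(2)[OF sum_in_bigo(2)[OF X1 X2]
          cdiv[OF sum_in_bigo(2)[OF sum_in_bigo(2)[OF sum_in_bigo(1)[OF Y1 Y2] Y3] Y4]]] C6])
  have mA: "(\<lambda>h. (1/h) * R h) \<in> O[at_right 0](\<lambda>h. (1/h) * h^6)"
    by (rule landau_o.big.mult_left[OF Rb])
  have ev5: "eventually (\<lambda>h::real. (1/h)*h^6 = h^5) (at_right 0)"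
      using eventually_at_right_less[of "0::real"] by eventually_elim (simp add: eval_nat_numeral)
  have mB: "(\<lambda>h::real. (1/h) * h^6) \<in> O[at_right 0](\<lambda>h. h^5)"
    by (rule bigoI[where c=1]) (use ev5 in \<open>auto elim: eventually_mono\<close>)
  have fin: "(\<lambda>h. (1/h) * R h) \<in> O[at_right 0](\<lambda>h. h^5)" by (rule landau_o.big.trans[OF mA mB])
  show ?thesis unfolding assms(7,8) tgt
  proof (subst landau_o.big.in_cong)
    show "eventually (\<lambda>h. trunc_err k 0 th 0 f Dbar u x h - T' h = (1/h) * R h) (at_right 0)"
      using eventually_at_right_less[of "0::real"]
    proof eventually_elim
      case (elim h)
      then have "h \<noteq> 0" by simp
      from key[OF this] this show ?case by (simp add: field_simps)
    qed
  qed (rule fin)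
qed

end
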